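(* Let $n\ge2$. The set $\mathcal{C}=\{N\in\mathcal{G}_n:\mathbb{F}_n/N\text{ is co-Hopfian}\}$ is in $\mathbf{\Pi}^0_2$, and $\mathcal{C}$ is not closed in $\mathcal{G}_n$.
   Context: $\mathbb{F}_n$ is the free group on $\gamma_1,\dots,\gamma_n$. $\mathcal{G}_n$ is the set of normal subgroups $N\trianglelefteq\mathbb{F}_n$, viewed as a subset of $\{0,1\}^{\mathbb{F}_n}$ with the subspace topology of the product of discrete topologies (a compact zero-dimensional Polish space). A group is co-Hopfian if every injective endomorphism of it is an isomorphism. $\mathbf{\Pi}^0_2$ = countable intersections of open sets. *)

theory Defs
  imports "HOL-Analysis.Analysis" "HOL-Algebra.Algebra"
begin

text \<open>Free group on generators 0..n-1 (standing for gamma_1..gamma_n): reduced words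
  over letters (i, b), where b = True means the inverse of generator i.\<close>

type_synonym letter = "nat \<times> bool"

definition inv_letter :: "letter \<Rightarrow> letter" where
  "inv_letter a = (fst a, \<not> snd a)"

fun reduced :: "letter list \<Rightarrow> bool" where
  "reduced [] = True"
| "reduced [a] = True"
| "reduced (a # b # w) = (b \<noteq> inv_letter a \<and> reduced (b # w))"

definition red_cons :: "letter \<Rightarrow> letter list \<Rightarrow> letter list" where
  "red_cons a w = (case w of [] \<Rightarrow> [a]
      | b # w' \<Rightarrow> (if b = inv_letter a then w' else a # w))"

definition reduce :: "letter list \<Rightarrow> letter list" where
  "reduce xs = foldr red_cons xs []"

definition free_group :: "nat \<Rightarrow> letter list monoid" where
  "free_group n = \<lparr> carrier = {w. reduced w \<and> (\<forall>a \<in> set w. fst a < n)},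
                    mult = (\<lambda>x y. reduce (x @ y)),
                    one = [] \<rparr>"

definition co_hopfian :: "('a, 'b) monoid_scheme \<Rightarrow> bool" where
  "co_hopfian G \<longleftrightarrow>
     (\<forall>h \<in> hom G G. inj_on h (carrier G) \<longrightarrow> h \<in> iso G G)"

definition cantor_top :: "nat \<Rightarrow> (letter list \<Rightarrow> bool) topology" where
  "cantor_top n = product_topology (\<lambda>_. discrete_topology UNIV) (carrier (free_group n))"

definition char_fun :: "nat \<Rightarrow> letter list set \<Rightarrow> (letter list \<Rightarrow> bool)" where
  "char_fun n N = (\<lambda>w \<in> carrier (free_group n). w \<in> N)"

definition Gn :: "nat \<Rightarrow> (letter list \<Rightarrow> bool) set" where
  "Gn n = char_fun n ` {N. normal N (free_group n)}"

definition Gn_top :: "nat \<Rightarrow> (letter list \<Rightarrow> bool) topology" where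
  "Gn_top n = subtopology (cantor_top n) (Gn n)"

definition Pi02 :: "'a topology \<Rightarrow> 'a set \<Rightarrow> bool" where
  "Pi02 T A \<longleftrightarrow> (\<exists>V :: nat \<Rightarrow> 'a set. (\<forall>k. openin T (V k)) \<and> A = \<Inter> (range V))"

end

theory Submission
  imports Defs
begin



lemma inv_inv_letter[simp]: "inv_letter (inv_letter a) = a"
  by (simp add: inv_letter_def)

lemma inv_letter_neq[simp]: "inv_letter a \<noteq> a"  "a \<noteq> inv_letter a"
  by (auto simp: inv_letter_def prod_eq_iff)

lemma fst_inv_letter[simp]: "fst (inv_letter a) = fst a"
  by (simp add: inv_letter_def)

lemma reduced_Cons: "reduced (a # w) \<longleftrightarrow> reduced w \<and> (w \<noteq> [] \<longrightarrow> hd w \<noteq> inv_letter a)"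
  by (cases w) auto

lemma reduced_red_cons: "reduced w \<Longrightarrow> reduced (red_cons a w)"
  by (cases w) (auto simp: red_cons_def reduced_Cons)

lemma set_red_cons: "set (red_cons a w) \<subseteq> insert a (set w)"
  by (cases w) (auto simp: red_cons_def)

abbreviation R :: "letter list \<Rightarrow> letter list \<Rightarrow> letter list" where
  "R w v \<equiv> foldr red_cons w v"

lemma reduced_R: "reduced v \<Longrightarrow> reduced (R w v)"
  by (induction w) (auto intro: reduced_red_cons)

lemma set_R: "set (R w v) \<subseteq> set w \<union> set v"
  by (induction w) (use set_red_cons in fastforce)+

lemma red_cons_cancel: "reduced v \<Longrightarrow> red_cons a (red_cons (inv_letter a) v) = v"
proof (cases v)
  case Nil thus ?thesis by (simp add: red_cons_def)
next
  case (Cons b v')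
  assume r: "reduced v"
  show ?thesis
  proof (cases "b = a")
    case True
    with r Cons show ?thesis
      by (cases v') (auto simp: red_cons_def reduced_Cons)
  next
    case False
    with Cons show ?thesis by (auto simp: red_cons_def)
  qed
qed

lemma red_cons_reduced: "reduced (a # w) \<Longrightarrow> red_cons a w = a # w"
  by (cases w) (auto simp: red_cons_def)

lemma R_reduced: "reduced w \<Longrightarrow> R w [] = w"
proof (induction w)
  case (Cons a w)
  then show ?case by (simp add: reduced_Cons red_cons_reduced)
qed simp

lemma R_R: "reduced v \<Longrightarrow> R (R w []) v = R w v"
proof (induction w)
  case Nil thus ?case by simp
next
  case (Cons a w)
  define p where "p = R w []"
  have rp: "reduced p" unfolding p_def by (rule reduced_R) simp
  have IH: "R p v = R w v" using Cons unfolding p_def by simp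
  show ?case
  proof (cases "p \<noteq> [] \<and> hd p = inv_letter a")
    case True
    then obtain p' where pp: "p = inv_letter a # p'" by (cases p) auto
    have "R (red_cons a p) v = R p' v" using pp by (simp add: red_cons_def)
    also have "\<dots> = red_cons a (R p v)"
      using pp red_cons_cancel[of "R p' v" a] reduced_R[OF Cons.prems, of p'] by simp
    finally show ?thesis using IH p_def by simp
  next
    case False
    hence "red_cons a p = a # p" by (cases p) (auto simp: red_cons_def)
    thus ?thesis using IH p_def by simp
  qed
qed

lemma R_inverse: "reduced v \<Longrightarrow> R (rev (map inv_letter w)) (R w v) = v"
proof (induction w)
  case (Cons a w)
  have "R (rev (map inv_letter (a # w))) (R (a # w) v)
        = R (rev (map inv_letter w)) (red_cons (inv_letter a) (red_cons a (R w v)))"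
    by simp
  also have "\<dots> = R (rev (map inv_letter w)) (R w v)"
    using red_cons_cancel[of "R w v" "inv_letter a"] reduced_R[OF Cons.prems] by simp
  finally show ?case using Cons by simp
qed simp

lemma reduce_eq: "reduce w = R w []" by (simp add: reduce_def)

lemma fg_carrier: "carrier (free_group n) = {w. reduced w \<and> (\<forall>a\<in>set w. fst a < n)}"
  by (simp add: free_group_def)
lemma fg_mult: "x \<otimes>\<^bsub>free_group n\<^esub> y = R x (R y [])"
  by (simp add: free_group_def reduce_def)
lemma fg_one: "\<one>\<^bsub>free_group n\<^esub> = []"
  by (simp add: free_group_def)

lemma group_fg: "group (free_group n)"
proof (rule groupI)
  fix x y assume "x \<in> carrier (free_group n)" "y \<in> carrier (free_group n)"
  thus "x \<otimes>\<^bsub>free_group n\<^esub> y \<in> carrier (free_group n)"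
    using set_R[of x "R y []"] set_R[of y "[]"]
    by (auto simp: fg_carrier fg_mult intro!: reduced_R)
next
  show "\<one>\<^bsub>free_group n\<^esub> \<in> carrier (free_group n)" by (simp add: fg_carrier fg_one)
next
  fix x y z assume "x \<in> carrier (free_group n)" "y \<in> carrier (free_group n)" "z \<in> carrier (free_group n)"
  have rz: "reduced (R z [])" by (rule reduced_R) simp
  have "R (R x (R y [])) (R z []) = R (R (x @ y) []) (R z [])" by (simp add: foldr_append)
  also have "\<dots> = R x (R y (R z []))" by (subst R_R[OF rz]) (simp add: foldr_append)
  finally have 1: "R (R x (R y [])) (R z []) = R x (R y (R z []))" .
  have "R x (R (R y (R z [])) []) = R x (R (R (y @ z) []) [])" by (simp add: foldr_append)
  also have "\<dots> = R x (R y (R z []))" by (subst R_R) (simp_all add: foldr_append)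
  finally show "x \<otimes>\<^bsub>free_group n\<^esub> y \<otimes>\<^bsub>free_group n\<^esub> z = x \<otimes>\<^bsub>free_group n\<^esub> (y \<otimes>\<^bsub>free_group n\<^esub> z)"
    using 1 by (simp add: fg_mult)
next
  fix x assume "x \<in> carrier (free_group n)"
  thus "\<one>\<^bsub>free_group n\<^esub> \<otimes>\<^bsub>free_group n\<^esub> x = x" by (simp add: fg_one fg_mult fg_carrier R_reduced)
next
  fix x assume x: "x \<in> carrier (free_group n)"
  let ?y = "R (rev (map inv_letter x)) []"
  have "?y \<in> carrier (free_group n)"
    using set_R[of "rev (map inv_letter x)" "[]"] x by (fastforce simp: fg_carrier intro!: reduced_R)
  moreover have "?y \<otimes>\<^bsub>free_group n\<^esub> x = \<one>\<^bsub>free_group n\<^esub>"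
    using x R_R[of x "rev (map inv_letter x)"] R_inverse[of "[]" x]
    by (simp add: fg_mult fg_one fg_carrier R_reduced)
  ultimately show "\<exists>y\<in>carrier (free_group n). y \<otimes>\<^bsub>free_group n\<^esub> x = \<one>\<^bsub>free_group n\<^esub>" by blast
qed

interpretation F: group "free_group n" by (rule group_fg)

lemma gen_carrier: "fst a < n \<Longrightarrow> [a] \<in> carrier (free_group n)"
  by (simp add: fg_carrier)

lemma inv_gen: "fst a < n \<Longrightarrow> inv\<^bsub>free_group n\<^esub> [a] = [inv_letter a]"
  by (rule F.inv_equality) (auto simp: fg_mult fg_one gen_carrier red_cons_def)

lemma decomp: "a # w \<in> carrier (free_group n) \<Longrightarrow>
   w \<in> carrier (free_group n) \<and> fst a < n \<and> a # w = [a] \<otimes>\<^bsub>free_group n\<^esub> w"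
  by (auto simp: fg_carrier fg_mult reduced_Cons R_reduced red_cons_reduced)

lemma fg_induct[consumes 1, case_names Nil Cons]:
  assumes "w \<in> carrier (free_group n)" "P []"
   "\<And>a w. w \<in> carrier (free_group n) \<Longrightarrow> fst a < n \<Longrightarrow> P w \<Longrightarrow>
       P ([a] \<otimes>\<^bsub>free_group n\<^esub> w)"
  shows "P w"
  using assms(1)
proof (induction w)
  case (Cons a w)
  from decomp[OF Cons.prems] Cons.IH assms(3) show ?case by metis
qed (use assms in auto)

subsection \<open>Substitution homomorphisms\<close>

definition uu :: "nat \<Rightarrow> letter list list \<Rightarrow> nat \<Rightarrow> letter list" where
  "uu n us i = (if i < length us \<and> us ! i \<in> carrier (free_group n) then us ! i else [])"

lemma uu_carrier: "uu n us i \<in> carrier (free_group n)"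
  by (simp add: uu_def fg_carrier)

definition gl :: "nat \<Rightarrow> letter list list \<Rightarrow> letter \<Rightarrow> letter list" where
  "gl n us a = (if snd a then inv\<^bsub>free_group n\<^esub> (uu n us (fst a)) else uu n us (fst a))"

lemma gl_carrier: "gl n us a \<in> carrier (free_group n)"
  by (simp add: gl_def uu_carrier)

lemma gl_inv: "gl n us (inv_letter a) = inv\<^bsub>free_group n\<^esub> (gl n us a)"
  by (auto simp: gl_def inv_letter_def uu_carrier)

definition sig :: "nat \<Rightarrow> letter list list \<Rightarrow> letter list \<Rightarrow> letter list" where
  "sig n us w = foldr (\<lambda>a acc. gl n us a \<otimes>\<^bsub>free_group n\<^esub> acc) w \<one>\<^bsub>free_group n\<^esub>"

lemma sig_carrier: "sig n us w \<in> carrier (free_group n)"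
  unfolding sig_def by (induction w) (auto simp: gl_carrier)

lemma sig_Cons: "sig n us (a # w) = gl n us a \<otimes>\<^bsub>free_group n\<^esub> sig n us w"
  by (simp add: sig_def)

lemma sig_Nil[simp]: "sig n us [] = \<one>\<^bsub>free_group n\<^esub>"
  by (simp add: sig_def)

lemma sig_append: "sig n us (x @ y) = sig n us x \<otimes>\<^bsub>free_group n\<^esub> sig n us y"
  by (induction x) (simp_all add: sig_Cons sig_carrier gl_carrier F.m_assoc)

lemma sig_single: "sig n us [a] = gl n us a"
  by (simp add: sig_def gl_carrier)

lemma sig_red_cons: "sig n us (red_cons a v) = gl n us a \<otimes>\<^bsub>free_group n\<^esub> sig n us v"
proof (cases "v \<noteq> [] \<and> hd v = inv_letter a")
  case True
  then obtain v' where v: "v = inv_letter a # v'" by (cases v) auto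
  have "gl n us a \<otimes>\<^bsub>free_group n\<^esub> sig n us v = sig n us v'"
    by (simp add: v sig_Cons gl_inv gl_carrier sig_carrier F.m_assoc[symmetric])
  thus ?thesis by (simp add: v red_cons_def)
next
  case False
  hence "red_cons a v = a # v" by (cases v) (auto simp: red_cons_def)
  thus ?thesis by (simp add: sig_Cons)
qed

lemma sig_R: "sig n us (R w v) = sig n us w \<otimes>\<^bsub>free_group n\<^esub> sig n us v"
  by (induction w) (simp_all add: sig_red_cons sig_Cons sig_carrier gl_carrier F.m_assoc sig_def[of _ _ "[]"])

lemma sig_mult: "sig n us (x \<otimes>\<^bsub>free_group n\<^esub> y) = sig n us x \<otimes>\<^bsub>free_group n\<^esub> sig n us y"
  by (simp only: fg_mult[of n x y] sig_R) (simp add: sig_carrier)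

lemma sig_hom: "sig n us \<in> hom (free_group n) (free_group n)"
  by (rule homI) (simp_all add: sig_carrier sig_mult)

interpretation S: group_hom "free_group n" "free_group n" "sig n us"
  by (simp add: group_hom_def group_hom_axioms_def group_fg sig_hom)

subsection \<open>Exponent sum of generator 0\<close>

definition ev :: "letter \<Rightarrow> int" where
  "ev a = (if fst a = 0 then (if snd a then -1 else 1) else 0)"

definition ex :: "letter list \<Rightarrow> int" where
  "ex w = sum_list (map ev w)"

lemma ev_inv: "ev (inv_letter a) = - ev a"
  by (simp add: ev_def inv_letter_def)

lemma ex_red_cons: "ex (red_cons a v) = ev a + ex v"
  by (cases v) (auto simp: red_cons_def ex_def ev_inv)

lemma ex_Nil[simp]: "ex [] = 0" by (simp add: ex_def)
lemma ex_Cons[simp]: "ex (a # w) = ev a + ex w" by (simp add: ex_def)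

lemma ex_R: "ex (R w v) = ex w + ex v"
  by (induction w) (simp_all add: ex_red_cons)

lemma ex_mult: "ex (x \<otimes>\<^bsub>free_group n\<^esub> y) = ex x + ex y"
  by (simp add: fg_mult ex_R)

lemma ex_one: "ex \<one>\<^bsub>free_group n\<^esub> = 0"
  by (simp add: fg_one ex_def)

lemma ex_inv: "x \<in> carrier (free_group n) \<Longrightarrow> ex (inv\<^bsub>free_group n\<^esub> x) = - ex x"
  using ex_mult[of n "inv\<^bsub>free_group n\<^esub> x" x] ex_one[of n] by simp

definition Kk :: "nat \<Rightarrow> nat \<Rightarrow> letter list set" where
  "Kk n k = {w \<in> carrier (free_group n). int k dvd ex w}"

lemma Kk_normal: "Kk n k \<lhd> free_group n"
proof -
  have sg: "subgroup (Kk n k) (free_group n)"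
    by (rule F.subgroupI) (use F.one_closed[of n] in \<open>auto simp: Kk_def ex_inv ex_mult fg_one\<close>)
  show ?thesis unfolding F.normal_inv_iff
    using sg by (auto simp: Kk_def ex_inv ex_mult)
qed




definition cond1 :: "nat \<Rightarrow> (letter list \<Rightarrow> bool) \<Rightarrow> letter list list \<Rightarrow> bool" where
  "cond1 n f us = (\<exists>r\<in>carrier (free_group n). f r \<and> \<not> f (sig n us r))"
definition cond2 :: "nat \<Rightarrow> (letter list \<Rightarrow> bool) \<Rightarrow> letter list list \<Rightarrow> bool" where
  "cond2 n f us = (\<exists>w\<in>carrier (free_group n). f (sig n us w) \<and> \<not> f w)"
definition cond3 :: "nat \<Rightarrow> (letter list \<Rightarrow> bool) \<Rightarrow> letter list list \<Rightarrow> bool" where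
  "cond3 n f us = (\<forall>i<n. \<exists>v\<in>carrier (free_group n).
       f (sig n us v \<otimes>\<^bsub>free_group n\<^esub> inv\<^bsub>free_group n\<^esub> [(i, False)]))"

context
  fixes n :: nat and N :: "letter list set"
  assumes nN: "N \<lhd> free_group n"
begin

interpretation N: normal N "free_group n" by (rule nN)
interpretation Q: group "free_group n Mod N" by (rule N.factorgroup_is_group)

lemma NsubF: "N \<subseteq> carrier (free_group n)" by (rule N.subset)

lemma Q_carrier: "carrier (free_group n Mod N) = (\<lambda>x. N #>\<^bsub>free_group n\<^esub> x) ` carrier (free_group n)"
  by (rule carrier_FactGroup)

lemma Q_mult: "x \<in> carrier (free_group n) \<Longrightarrow> y \<in> carrier (free_group n) \<Longrightarrow>
  (N #>\<^bsub>free_group n\<^esub> x) \<otimes>\<^bsub>free_group n Mod N\<^esub> (N #>\<^bsub>free_group n\<^esub> y) = N #>\<^bsub>free_group n\<^esub> (x \<otimes>\<^bsub>free_group n\<^esub> y)"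
  by (simp add: N.rcos_sum)

lemma Q_one: "\<one>\<^bsub>free_group n Mod N\<^esub> = N" by simp

lemma coset_in_Q: "x \<in> carrier (free_group n) \<Longrightarrow> N #>\<^bsub>free_group n\<^esub> x \<in> carrier (free_group n Mod N)"
  by (simp add: Q_carrier)

lemma Q_inv: "x \<in> carrier (free_group n) \<Longrightarrow>
  inv\<^bsub>free_group n Mod N\<^esub> (N #>\<^bsub>free_group n\<^esub> x) = N #>\<^bsub>free_group n\<^esub> (inv\<^bsub>free_group n\<^esub> x)"
  by (simp add: N.inv_FactGroup coset_in_Q N.rcos_inv)

lemma coset_eq: "x \<in> carrier (free_group n) \<Longrightarrow> y \<in> carrier (free_group n) \<Longrightarrow>
  (N #>\<^bsub>free_group n\<^esub> x = N #>\<^bsub>free_group n\<^esub> y) \<longleftrightarrow> x \<otimes>\<^bsub>free_group n\<^esub> inv\<^bsub>free_group n\<^esub> y \<in> N"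
proof
  assume x: "x \<in> carrier (free_group n)" and y: "y \<in> carrier (free_group n)"
    and e: "N #>\<^bsub>free_group n\<^esub> x = N #>\<^bsub>free_group n\<^esub> y"
  have "x \<in> N #>\<^bsub>free_group n\<^esub> y" using e F.rcos_self[OF x N.subgroup_axioms] by simp
  thus "x \<otimes>\<^bsub>free_group n\<^esub> inv\<^bsub>free_group n\<^esub> y \<in> N"
    using N.rcos_module_imp[OF group_fg y] by simp
next
  assume x: "x \<in> carrier (free_group n)" and y: "y \<in> carrier (free_group n)"
    and e: "x \<otimes>\<^bsub>free_group n\<^esub> inv\<^bsub>free_group n\<^esub> y \<in> N"
  have "x \<in> N #>\<^bsub>free_group n\<^esub> y" using N.rcos_module_rev[OF group_fg y x e] .
  thus "N #>\<^bsub>free_group n\<^esub> x = N #>\<^bsub>free_group n\<^esub> y"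
    using F.repr_independence[OF _ y N.subgroup_axioms] by simp
qed

lemma coset_one: "x \<in> carrier (free_group n) \<Longrightarrow> (N #>\<^bsub>free_group n\<^esub> x = N) \<longleftrightarrow> x \<in> N"
  using coset_eq[of x "\<one>\<^bsub>free_group n\<^esub>"] by (simp add: F.coset_mult_one NsubF)

lemma coset_rep: "XX \<in> carrier (free_group n Mod N) \<Longrightarrow> x \<in> XX \<Longrightarrow>
   x \<in> carrier (free_group n) \<and> XX = N #>\<^bsub>free_group n\<^esub> x"
proof -
  assume XX: "XX \<in> carrier (free_group n Mod N)" and x: "x \<in> XX"
  then obtain y where y: "y \<in> carrier (free_group n)" "XX = N #>\<^bsub>free_group n\<^esub> y"
    using Q_carrier by auto
  have xc: "x \<in> carrier (free_group n)" using N.elemrcos_carrier[OF group_fg y(1)] x y(2) by simp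
  show ?thesis using xc F.repr_independence[OF _ y(1) N.subgroup_axioms] x y(2) by simp
qed

lemma inv_gen0: "i < n \<Longrightarrow> inv\<^bsub>free_group n\<^esub> [(i, False)] = [(i, True)]"
  using inv_gen[of "(i, False)" n] by (simp add: inv_letter_def)

lemma hom_coset: "h \<in> hom (free_group n Mod N) (free_group n Mod N) \<Longrightarrow>
   (\<forall>i<n. h (N #>\<^bsub>free_group n\<^esub> [(i, False)]) = N #>\<^bsub>free_group n\<^esub> uu n us i) \<Longrightarrow>
   w \<in> carrier (free_group n) \<Longrightarrow> h (N #>\<^bsub>free_group n\<^esub> w) = N #>\<^bsub>free_group n\<^esub> sig n us w"
proof -
  assume hh: "h \<in> hom (free_group n Mod N) (free_group n Mod N)"
    and hu: "\<forall>i<n. h (N #>\<^bsub>free_group n\<^esub> [(i, False)]) = N #>\<^bsub>free_group n\<^esub> uu n us i"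
    and w: "w \<in> carrier (free_group n)"
  interpret H: group_hom "free_group n Mod N" "free_group n Mod N" h
    using hh by (simp add: group_hom_def group_hom_axioms_def N.factorgroup_is_group)
  have ga: "h (N #>\<^bsub>free_group n\<^esub> [a]) = N #>\<^bsub>free_group n\<^esub> gl n us a" if a: "fst a < n" for a
  proof (cases a)
    case (Pair i b)
    show ?thesis
    proof (cases b)
      case False thus ?thesis using hu a Pair by (simp add: gl_def)
    next
      case True
      have g: "[(i, False)] \<in> carrier (free_group n)" using a Pair gen_carrier[of "(i,False)" n] by simp
      have "N #>\<^bsub>free_group n\<^esub> [a] = inv\<^bsub>free_group n Mod N\<^esub> (N #>\<^bsub>free_group n\<^esub> [(i, False)])"
        using Q_inv[OF g] inv_gen0[of i] a Pair True by simp
      hence "h (N #>\<^bsub>free_group n\<^esub> [a]) = inv\<^bsub>free_group n Mod N\<^esub> (N #>\<^bsub>free_group n\<^esub> uu n us i)"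
        using hu a Pair coset_in_Q[OF g] by simp
      thus ?thesis using Q_inv[OF uu_carrier] Pair True by (simp add: gl_def)
    qed
  qed
  show ?thesis using w
  proof (induction rule: fg_induct)
    case Nil
    have "N #>\<^bsub>free_group n\<^esub> [] = N" using coset_one[of "[]"] N.one_closed by (simp add: fg_one)
    thus ?case using H.hom_one by (simp add: fg_one)
  next
    case (Cons a w)
    have g: "[a] \<in> carrier (free_group n)" using Cons gen_carrier by simp
    have "h (N #>\<^bsub>free_group n\<^esub> ([a] \<otimes>\<^bsub>free_group n\<^esub> w)) =
        h ((N #>\<^bsub>free_group n\<^esub> [a]) \<otimes>\<^bsub>free_group n Mod N\<^esub> (N #>\<^bsub>free_group n\<^esub> w))"
      using Q_mult[OF g Cons(1)] by simp
    also have "\<dots> = (N #>\<^bsub>free_group n\<^esub> gl n us a) \<otimes>\<^bsub>free_group n Mod N\<^esub> (N #>\<^bsub>free_group n\<^esub> sig n us w)"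
      using H.hom_mult[OF coset_in_Q[OF g] coset_in_Q[OF Cons(1)]] ga[OF Cons(2)] Cons(3) by simp
    also have "\<dots> = N #>\<^bsub>free_group n\<^esub> sig n us ([a] \<otimes>\<^bsub>free_group n\<^esub> w)"
      using Q_mult[OF gl_carrier sig_carrier] by (simp add: sig_mult sig_single)
    finally show ?case .
  qed
qed

lemma hopf_imp_conds:
  assumes ch: "co_hopfian (free_group n Mod N)"
  shows "cond1 n (\<lambda>w. w \<in> N) us \<or> cond2 n (\<lambda>w. w \<in> N) us \<or> cond3 n (\<lambda>w. w \<in> N) us"
proof (rule ccontr)
  assume nc: "\<not> ?thesis"
  have n1: "\<not> cond1 n (\<lambda>w. w \<in> N) us" and n2: "\<not> cond2 n (\<lambda>w. w \<in> N) us"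
    and c3: "\<not> cond3 n (\<lambda>w. w \<in> N) us" using nc by simp_all
  have c1: "\<And>r. r \<in> carrier (free_group n) \<Longrightarrow> r \<in> N \<Longrightarrow> sig n us r \<in> N"
    using n1 unfolding cond1_def by blast
  have c2: "\<And>w. w \<in> carrier (free_group n) \<Longrightarrow> sig n us w \<in> N \<Longrightarrow> w \<in> N"
    using n2 unfolding cond2_def by blast
  define h where "h XX = N #>\<^bsub>free_group n\<^esub> sig n us (SOME x. x \<in> XX)" for XX
  have hc: "h (N #>\<^bsub>free_group n\<^esub> w) = N #>\<^bsub>free_group n\<^esub> sig n us w"
    if w: "w \<in> carrier (free_group n)" for w
  proof -
    let ?x = "SOME x. x \<in> N #>\<^bsub>free_group n\<^esub> w"
    have "?x \<in> N #>\<^bsub>free_group n\<^esub> w"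
      using F.rcos_self[OF w N.subgroup_axioms] by (rule someI)
    from coset_rep[OF coset_in_Q[OF w] this]
    have x: "?x \<in> carrier (free_group n)" "N #>\<^bsub>free_group n\<^esub> w = N #>\<^bsub>free_group n\<^esub> ?x" by auto
    have "?x \<otimes>\<^bsub>free_group n\<^esub> inv\<^bsub>free_group n\<^esub> w \<in> N" using coset_eq[OF x(1) w] x(2) by simp
    hence "sig n us (?x \<otimes>\<^bsub>free_group n\<^esub> inv\<^bsub>free_group n\<^esub> w) \<in> N" by (rule c1[OF F.m_closed[OF x(1) F.inv_closed[OF w]]])
    hence "sig n us ?x \<otimes>\<^bsub>free_group n\<^esub> inv\<^bsub>free_group n\<^esub> sig n us w \<in> N"
      using x(1) w by (simp add: sig_mult S.hom_inv)
    hence "N #>\<^bsub>free_group n\<^esub> sig n us ?x = N #>\<^bsub>free_group n\<^esub> sig n us w"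
      using coset_eq[OF sig_carrier sig_carrier] by simp
    thus ?thesis by (simp add: h_def)
  qed
  have hom: "h \<in> hom (free_group n Mod N) (free_group n Mod N)"
  proof (rule homI)
    fix XX assume "XX \<in> carrier (free_group n Mod N)"
    then obtain w where "w \<in> carrier (free_group n)" "XX = N #>\<^bsub>free_group n\<^esub> w" using Q_carrier by auto
    thus "h XX \<in> carrier (free_group n Mod N)" using hc coset_in_Q[OF sig_carrier] by simp
  next
    fix XX YY assume "XX \<in> carrier (free_group n Mod N)" "YY \<in> carrier (free_group n Mod N)"
    then obtain x y where xy: "x \<in> carrier (free_group n)" "XX = N #>\<^bsub>free_group n\<^esub> x"
      "y \<in> carrier (free_group n)" "YY = N #>\<^bsub>free_group n\<^esub> y" using Q_carrier by auto
    show "h (XX \<otimes>\<^bsub>free_group n Mod N\<^esub> YY) = h XX \<otimes>\<^bsub>free_group n Mod N\<^esub> h YY"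
      using xy hc Q_mult[OF xy(1,3)] Q_mult[OF sig_carrier sig_carrier] by (simp add: sig_mult)
  qed
  have inj: "inj_on h (carrier (free_group n Mod N))"
  proof (rule inj_onI)
    fix XX YY assume "XX \<in> carrier (free_group n Mod N)" "YY \<in> carrier (free_group n Mod N)" and e: "h XX = h YY"
    then obtain x y where xy: "x \<in> carrier (free_group n)" "XX = N #>\<^bsub>free_group n\<^esub> x"
      "y \<in> carrier (free_group n)" "YY = N #>\<^bsub>free_group n\<^esub> y" using Q_carrier by auto
    have "N #>\<^bsub>free_group n\<^esub> sig n us x = N #>\<^bsub>free_group n\<^esub> sig n us y"
      using e xy hc[OF xy(1)] hc[OF xy(3)] by simp
    hence "sig n us x \<otimes>\<^bsub>free_group n\<^esub> inv\<^bsub>free_group n\<^esub> sig n us y \<in> N"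
      by (rule iffD1[OF coset_eq[OF sig_carrier[of n us x] sig_carrier[of n us y]]])
    hence "sig n us (x \<otimes>\<^bsub>free_group n\<^esub> inv\<^bsub>free_group n\<^esub> y) \<in> N"
      using xy by (simp add: sig_mult S.hom_inv)
    hence "x \<otimes>\<^bsub>free_group n\<^esub> inv\<^bsub>free_group n\<^esub> y \<in> N" by (rule c2[OF F.m_closed[OF xy(1) F.inv_closed[OF xy(3)]]])
    thus "XX = YY" using coset_eq[OF xy(1,3)] xy by simp
  qed
  have "h \<in> iso (free_group n Mod N) (free_group n Mod N)"
    using ch hom inj by (simp add: co_hopfian_def)
  hence surj: "h ` carrier (free_group n Mod N) = carrier (free_group n Mod N)"
    by (simp add: iso_def bij_betw_def)
  have "cond3 n (\<lambda>w. w \<in> N) us"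
    unfolding cond3_def
  proof (intro allI impI)
    fix i assume i: "i < n"
    have g: "[(i, False)] \<in> carrier (free_group n)" using i gen_carrier[of "(i,False)" n] by simp
    have "N #>\<^bsub>free_group n\<^esub> [(i, False)] \<in> h ` carrier (free_group n Mod N)"
      using surj coset_in_Q[OF g] by simp
    then obtain XX where XX: "XX \<in> carrier (free_group n Mod N)" "N #>\<^bsub>free_group n\<^esub> [(i, False)] = h XX"
      by blast
    then obtain v where v: "v \<in> carrier (free_group n)" "XX = N #>\<^bsub>free_group n\<^esub> v" using Q_carrier by auto
    have "N #>\<^bsub>free_group n\<^esub> sig n us v = N #>\<^bsub>free_group n\<^esub> [(i, False)]" using XX(2) v hc[OF v(1)] by simp
    hence "sig n us v \<otimes>\<^bsub>free_group n\<^esub> inv\<^bsub>free_group n\<^esub> [(i, False)] \<in> N"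
      by (rule iffD1[OF coset_eq[OF sig_carrier[of n us v] g]])
    thus "\<exists>v\<in>carrier (free_group n). sig n us v \<otimes>\<^bsub>free_group n\<^esub> inv\<^bsub>free_group n\<^esub> [(i, False)] \<in> N"
      using v by blast
  qed
  with c3 show False by simp
qed

lemma conds_imp_hopf:
  assumes all: "\<And>us. cond1 n (\<lambda>w. w \<in> N) us \<or> cond2 n (\<lambda>w. w \<in> N) us \<or> cond3 n (\<lambda>w. w \<in> N) us"
  shows "co_hopfian (free_group n Mod N)"
  unfolding co_hopfian_def
proof (intro ballI impI)
  fix h assume hh: "h \<in> hom (free_group n Mod N) (free_group n Mod N)"
    and inj: "inj_on h (carrier (free_group n Mod N))"
  interpret H: group_hom "free_group n Mod N" "free_group n Mod N" h
    using hh by (simp add: group_hom_def group_hom_axioms_def N.factorgroup_is_group)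
  define x where "x i = (SOME x. x \<in> h (N #>\<^bsub>free_group n\<^esub> [(i, False)]))" for i
  define us where "us = map x [0..<n]"
  have hx: "h (N #>\<^bsub>free_group n\<^esub> [(i, False)]) = N #>\<^bsub>free_group n\<^esub> uu n us i" if i: "i < n" for i
  proof -
    have g: "[(i, False)] \<in> carrier (free_group n)" using i gen_carrier[of "(i,False)" n] by simp
    have hin: "h (N #>\<^bsub>free_group n\<^esub> [(i, False)]) \<in> carrier (free_group n Mod N)"
      using coset_in_Q[OF g] by simp
    then obtain z where z: "z \<in> carrier (free_group n)" "h (N #>\<^bsub>free_group n\<^esub> [(i, False)]) = N #>\<^bsub>free_group n\<^esub> z"
      using Q_carrier by auto
    have "z \<in> h (N #>\<^bsub>free_group n\<^esub> [(i, False)])"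
      using F.rcos_self[OF z(1) N.subgroup_axioms] z(2) by simp
    hence "x i \<in> h (N #>\<^bsub>free_group n\<^esub> [(i, False)])"
      unfolding x_def by (rule someI)
    from coset_rep[OF hin this]
    have "x i \<in> carrier (free_group n)" "h (N #>\<^bsub>free_group n\<^esub> [(i, False)]) = N #>\<^bsub>free_group n\<^esub> x i" by auto
    moreover have "uu n us i = x i" using i \<open>x i \<in> carrier (free_group n)\<close> by (simp add: uu_def us_def)
    ultimately show ?thesis by simp
  qed
  have hc: "\<And>w. w \<in> carrier (free_group n) \<Longrightarrow> h (N #>\<^bsub>free_group n\<^esub> w) = N #>\<^bsub>free_group n\<^esub> sig n us w"
    by (rule hom_coset[OF hh]) (simp_all add: hx)
  have hN: "h N = N" using H.hom_one by simp
  have "\<not> cond1 n (\<lambda>w. w \<in> N) us"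
  proof
    assume "cond1 n (\<lambda>w. w \<in> N) us"
    then obtain r where r: "r \<in> carrier (free_group n)" "r \<in> N" "sig n us r \<notin> N" by (auto simp: cond1_def)
    have "N #>\<^bsub>free_group n\<^esub> sig n us r = N" using hc[OF r(1)] coset_one[OF r(1)] r(2) hN by simp
    thus False using coset_one[OF sig_carrier] r(3) by simp
  qed
  moreover have "\<not> cond2 n (\<lambda>w. w \<in> N) us"
  proof
    assume "cond2 n (\<lambda>w. w \<in> N) us"
    then obtain w where w: "w \<in> carrier (free_group n)" "sig n us w \<in> N" "w \<notin> N" by (auto simp: cond2_def)
    have hwN: "h (N #>\<^bsub>free_group n\<^esub> w) = h N" using hc[OF w(1)] coset_one[OF sig_carrier] w(2) hN by simp
    have "N #>\<^bsub>free_group n\<^esub> w = N"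
      using inj_onD[OF inj hwN coset_in_Q[OF w(1)] Q.one_closed[simplified]] by simp
    thus False using coset_one[OF w(1)] w(3) by simp
  qed
  ultimately have c3: "cond3 n (\<lambda>w. w \<in> N) us" using all by blast
  have sub: "subgroup (h ` carrier (free_group n Mod N)) (free_group n Mod N)" by (rule H.img_is_subgroup)
  have gens: "N #>\<^bsub>free_group n\<^esub> [(i, False)] \<in> h ` carrier (free_group n Mod N)" if i: "i < n" for i
  proof -
    have g: "[(i, False)] \<in> carrier (free_group n)" using i gen_carrier[of "(i,False)" n] by simp
    obtain v where v: "v \<in> carrier (free_group n)"
      "sig n us v \<otimes>\<^bsub>free_group n\<^esub> inv\<^bsub>free_group n\<^esub> [(i, False)] \<in> N"
      using c3 i by (auto simp: cond3_def)
    have "N #>\<^bsub>free_group n\<^esub> sig n us v = N #>\<^bsub>free_group n\<^esub> [(i, False)]"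
      using coset_eq[OF sig_carrier[of n us v] g] v(2) by (rule iffD2)
    hence "N #>\<^bsub>free_group n\<^esub> [(i, False)] = h (N #>\<^bsub>free_group n\<^esub> v)"
      using hc[OF v(1)] by simp
    thus ?thesis using coset_in_Q[OF v(1)] by blast
  qed
  have all_img: "N #>\<^bsub>free_group n\<^esub> w \<in> h ` carrier (free_group n Mod N)" if w: "w \<in> carrier (free_group n)" for w
    using w
  proof (induction rule: fg_induct)
    case Nil
    have "N #>\<^bsub>free_group n\<^esub> [] = N" using coset_one[of "[]"] N.one_closed by (simp add: fg_one)
    thus ?case using subgroup.one_closed[OF sub] by simp
  next
    case (Cons a w)
    obtain i b where a: "a = (i, b)" by (cases a)
    have i: "i < n" using Cons(2) a by simp
    have g: "[(i, False)] \<in> carrier (free_group n)" using i gen_carrier[of "(i,False)" n] by simp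
    have ga: "N #>\<^bsub>free_group n\<^esub> [a] \<in> h ` carrier (free_group n Mod N)"
    proof (cases b)
      case False thus ?thesis using gens i a by simp
    next
      case True
      have "N #>\<^bsub>free_group n\<^esub> [a] = inv\<^bsub>free_group n Mod N\<^esub> (N #>\<^bsub>free_group n\<^esub> [(i, False)])"
        using Q_inv[OF g] inv_gen0[OF i] a True by simp
      thus ?thesis using subgroup.m_inv_closed[OF sub gens[OF i]] by simp
    qed
    have "N #>\<^bsub>free_group n\<^esub> ([a] \<otimes>\<^bsub>free_group n\<^esub> w) =
        (N #>\<^bsub>free_group n\<^esub> [a]) \<otimes>\<^bsub>free_group n Mod N\<^esub> (N #>\<^bsub>free_group n\<^esub> w)"
      using Q_mult[OF gen_carrier[OF Cons(2)] Cons(1)] by simp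
    thus ?case using subgroup.m_closed[OF sub ga Cons(3)] by simp
  qed
  have "h ` carrier (free_group n Mod N) = carrier (free_group n Mod N)"
  proof
    show "h ` carrier (free_group n Mod N) \<subseteq> carrier (free_group n Mod N)" using subgroup.subset[OF sub] .
    show "carrier (free_group n Mod N) \<subseteq> h ` carrier (free_group n Mod N)"
    proof
      fix XX assume "XX \<in> carrier (free_group n Mod N)"
      then obtain w where "w \<in> carrier (free_group n)" "XX = N #>\<^bsub>free_group n\<^esub> w" using Q_carrier by auto
      thus "XX \<in> h ` carrier (free_group n Mod N)" using all_img by simp
    qed
  qed
  thus "h \<in> iso (free_group n Mod N) (free_group n Mod N)"
    using hh inj by (simp add: iso_def bij_betw_def)
qed

lemma hopf_iff: "co_hopfian (free_group n Mod N) \<longleftrightarrow>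
   (\<forall>us. cond1 n (\<lambda>w. w \<in> N) us \<or> cond2 n (\<lambda>w. w \<in> N) us \<or> cond3 n (\<lambda>w. w \<in> N) us)"
proof
  assume "co_hopfian (free_group n Mod N)"
  thus "\<forall>us. cond1 n (\<lambda>w. w \<in> N) us \<or> cond2 n (\<lambda>w. w \<in> N) us \<or> cond3 n (\<lambda>w. w \<in> N) us"
    using hopf_imp_conds by (intro allI) 
next
  assume "\<forall>us. cond1 n (\<lambda>w. w \<in> N) us \<or> cond2 n (\<lambda>w. w \<in> N) us \<or> cond3 n (\<lambda>w. w \<in> N) us"
  thus "co_hopfian (free_group n Mod N)" by (intro conds_imp_hopf) (rule spec)
qed

end




lemma Kk_mem: "w \<in> Kk n k \<longleftrightarrow> w \<in> carrier (free_group n) \<and> int k dvd ex w"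
  by (simp add: Kk_def)

lemma Kk_coset: "a \<in> carrier (free_group n) \<Longrightarrow> b \<in> carrier (free_group n) \<Longrightarrow>
   (Kk n k #>\<^bsub>free_group n\<^esub> a = Kk n k #>\<^bsub>free_group n\<^esub> b) \<longleftrightarrow> int k dvd (ex a - ex b)"
  by (simp add: coset_eq[OF Kk_normal] Kk_mem ex_mult ex_inv)

lemma finite_co_hopfian: "finite (carrier G) \<Longrightarrow> co_hopfian G"
  unfolding co_hopfian_def
proof (intro ballI impI)
  fix h assume f: "finite (carrier G)" and hh: "h \<in> hom G G" and inj: "inj_on h (carrier G)"
  have "h ` carrier G \<subseteq> carrier G" using hh by (auto simp: hom_def)
  hence "h ` carrier G = carrier G" using endo_inj_surj[OF f _ inj] by simp
  thus "h \<in> iso G G" using hh inj by (simp add: iso_def bij_betw_def)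
qed

lemma Kk_finite: assumes k: "k \<ge> 1" shows "finite (carrier (free_group n Mod Kk n k))"
proof -
  have "carrier (free_group n Mod Kk n k) \<subseteq>
     (\<lambda>j. {w' \<in> carrier (free_group n). ex w' mod int k = j}) ` {0..<int k}"
  proof
    fix XX assume "XX \<in> carrier (free_group n Mod Kk n k)"
    then obtain w where w: "w \<in> carrier (free_group n)" "XX = Kk n k #>\<^bsub>free_group n\<^esub> w"
      using Q_carrier[OF Kk_normal] by auto
    have "XX = {w' \<in> carrier (free_group n). ex w' mod int k = ex w mod int k}"
    proof -
      have "w' \<in> XX \<longleftrightarrow> w' \<in> carrier (free_group n) \<and> ex w' mod int k = ex w mod int k" for w'
      proof
        assume wX: "w' \<in> XX"
        have XQ: "XX \<in> carrier (free_group n Mod Kk n k)" using coset_in_Q[OF Kk_normal w(1)] w(2) by simp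
        have "w' \<in> carrier (free_group n)" "XX = Kk n k #>\<^bsub>free_group n\<^esub> w'"
          using coset_rep[OF Kk_normal XQ wX] by auto
        thus "w' \<in> carrier (free_group n) \<and> ex w' mod int k = ex w mod int k"
          using Kk_coset[of w' n w k] w by (simp add: mod_eq_dvd_iff)
      next
        assume "w' \<in> carrier (free_group n) \<and> ex w' mod int k = ex w mod int k"
        hence "w' \<in> carrier (free_group n)" "Kk n k #>\<^bsub>free_group n\<^esub> w' = Kk n k #>\<^bsub>free_group n\<^esub> w"
          using Kk_coset[of w' n w k] w by (simp_all add: mod_eq_dvd_iff)
        moreover have "w' \<in> Kk n k #>\<^bsub>free_group n\<^esub> w'"
          using F.rcos_self[OF \<open>w' \<in> carrier (free_group n)\<close> normal.axioms(1)[OF Kk_normal]] .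
        ultimately show "w' \<in> XX" using w(2) by simp
      qed
      thus ?thesis by blast
    qed
    moreover have "ex w mod int k \<in> {0..<int k}" using k by simp
    ultimately show "XX \<in> (\<lambda>j. {w' \<in> carrier (free_group n). ex w' mod int k = j}) ` {0..<int k}"
      by blast
  qed
  thus ?thesis by (rule finite_subset) simp
qed

lemma Kk_hopf: "k \<ge> 1 \<Longrightarrow> co_hopfian (free_group n Mod Kk n k)"
  by (rule finite_co_hopfian[OF Kk_finite])

lemma K0_not_hopf: assumes n: "n \<ge> 1" shows "\<not> co_hopfian (free_group n Mod Kk n 0)"
proof
  assume ch: "co_hopfian (free_group n Mod Kk n 0)"
  let ?Q = "free_group n Mod Kk n 0"
  let ?K = "Kk n 0"
  have KN: "?K \<lhd> free_group n" by (rule Kk_normal)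
  interpret Q: group ?Q by (rule normal.factorgroup_is_group[OF KN])
  have eqK: "(?K #>\<^bsub>free_group n\<^esub> a = ?K #>\<^bsub>free_group n\<^esub> b) \<longleftrightarrow> ex a = ex b"
    if "a \<in> carrier (free_group n)" "b \<in> carrier (free_group n)" for a b
    using Kk_coset[OF that, of 0] by simp
  define h where "h XX = XX \<otimes>\<^bsub>?Q\<^esub> XX" for XX
  have hc: "h (?K #>\<^bsub>free_group n\<^esub> x) = ?K #>\<^bsub>free_group n\<^esub> (x \<otimes>\<^bsub>free_group n\<^esub> x)"
    if "x \<in> carrier (free_group n)" for x
    using Q_mult[OF KN that that] by (simp add: h_def)
  have hom: "h \<in> hom ?Q ?Q"
  proof (rule homI)
    fix XX assume X: "XX \<in> carrier ?Q"
    show "h XX \<in> carrier ?Q" unfolding h_def by (rule Q.m_closed[OF X X])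
  next
    fix XX YY assume "XX \<in> carrier ?Q" "YY \<in> carrier ?Q"
    then obtain x y where xy: "x \<in> carrier (free_group n)" "XX = ?K #>\<^bsub>free_group n\<^esub> x"
      "y \<in> carrier (free_group n)" "YY = ?K #>\<^bsub>free_group n\<^esub> y" using Q_carrier[OF KN] by auto
    have "h (XX \<otimes>\<^bsub>?Q\<^esub> YY) = ?K #>\<^bsub>free_group n\<^esub> ((x \<otimes>\<^bsub>free_group n\<^esub> y) \<otimes>\<^bsub>free_group n\<^esub> (x \<otimes>\<^bsub>free_group n\<^esub> y))"
      using xy Q_mult[OF KN xy(1) xy(3)] hc by simp
    also have "\<dots> = ?K #>\<^bsub>free_group n\<^esub> ((x \<otimes>\<^bsub>free_group n\<^esub> x) \<otimes>\<^bsub>free_group n\<^esub> (y \<otimes>\<^bsub>free_group n\<^esub> y))"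
      using xy by (simp add: eqK ex_mult)
    also have "\<dots> = h XX \<otimes>\<^bsub>?Q\<^esub> h YY"
      using xy hc Q_mult[OF KN] by simp
    finally show "h (XX \<otimes>\<^bsub>?Q\<^esub> YY) = h XX \<otimes>\<^bsub>?Q\<^esub> h YY" .
  qed
  have inj: "inj_on h (carrier ?Q)"
  proof (rule inj_onI)
    fix XX YY assume "XX \<in> carrier ?Q" "YY \<in> carrier ?Q" and e: "h XX = h YY"
    then obtain x y where xy: "x \<in> carrier (free_group n)" "XX = ?K #>\<^bsub>free_group n\<^esub> x"
      "y \<in> carrier (free_group n)" "YY = ?K #>\<^bsub>free_group n\<^esub> y" using Q_carrier[OF KN] by auto
    have "ex (x \<otimes>\<^bsub>free_group n\<^esub> x) = ex (y \<otimes>\<^bsub>free_group n\<^esub> y)"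
      using e xy hc eqK by simp
    hence "ex x = ex y" by (simp add: ex_mult)
    thus "XX = YY" using xy eqK by simp
  qed
  have "h \<in> iso ?Q ?Q" using ch hom inj by (simp add: co_hopfian_def)
  hence surj: "h ` carrier ?Q = carrier ?Q" by (simp add: iso_def bij_betw_def)
  have g: "[(0, False)] \<in> carrier (free_group n)" using n gen_carrier[of "(0,False)" n] by simp
  have "?K #>\<^bsub>free_group n\<^esub> [(0, False)] \<in> h ` carrier ?Q"
    using surj coset_in_Q[OF KN g] by simp
  then obtain XX where XX: "XX \<in> carrier ?Q" "?K #>\<^bsub>free_group n\<^esub> [(0, False)] = h XX" by blast
  then obtain x where x: "x \<in> carrier (free_group n)" "XX = ?K #>\<^bsub>free_group n\<^esub> x"
    using Q_carrier[OF KN] by auto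
  have "ex [(0, False)] = ex (x \<otimes>\<^bsub>free_group n\<^esub> x)" using XX(2) x hc[OF x(1)] eqK[OF g] by simp
  hence "1 = 2 * ex x" by (simp add: ex_mult ev_def)
  thus False by presburger
qed




lemma char_fun_eval: "w \<in> carrier (free_group n) \<Longrightarrow> char_fun n N w = (w \<in> N)"
  by (simp add: char_fun_def)

lemma conds_char:
  "cond1 n (char_fun n N) us = cond1 n (\<lambda>w. w \<in> N) us"
  "cond2 n (char_fun n N) us = cond2 n (\<lambda>w. w \<in> N) us"
  "cond3 n (char_fun n N) us = cond3 n (\<lambda>w. w \<in> N) us"
  by (auto simp: cond1_def cond2_def cond3_def char_fun_eval sig_carrier
      F.m_closed F.inv_closed gen_carrier)

lemma char_fun_inj: "N \<subseteq> carrier (free_group n) \<Longrightarrow> M \<subseteq> carrier (free_group n) \<Longrightarrow>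
   char_fun n N = char_fun n M \<Longrightarrow> N = M"
  unfolding char_fun_def by (metis restrict_apply' subsetD subsetI subset_antisym)

lemma Gn_topspace: "Gn n \<subseteq> topspace (cantor_top n)"
  by (auto simp: Gn_def cantor_top_def char_fun_def)

lemma topspace_Gn: "topspace (Gn_top n) = Gn n"
  using Gn_topspace[of n] by (auto simp: Gn_top_def)

definition Bs :: "nat \<Rightarrow> letter list \<Rightarrow> bool \<Rightarrow> (letter list \<Rightarrow> bool) set" where
  "Bs n w b = {f \<in> Gn n. f w = b}"

lemma Bs_open: "w \<in> carrier (free_group n) \<Longrightarrow> openin (Gn_top n) (Bs n w b)"
proof -
  assume w: "w \<in> carrier (free_group n)"
  have c: "continuous_map (cantor_top n) (discrete_topology UNIV) (\<lambda>f. f w)"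
    unfolding cantor_top_def using continuous_map_product_projection[OF w, where X="\<lambda>_. discrete_topology UNIV"] by simp
  have "openin (cantor_top n) {f \<in> topspace (cantor_top n). f w \<in> {b}}"
    by (rule openin_continuous_map_preimage[OF c]) simp
  moreover have "Bs n w b = {f \<in> topspace (cantor_top n). f w \<in> {b}} \<inter> Gn n"
    using Gn_topspace[of n] by (auto simp: Bs_def)
  ultimately show ?thesis unfolding Gn_top_def openin_subtopology by blast
qed

definition Oset :: "nat \<Rightarrow> letter list list \<Rightarrow> (letter list \<Rightarrow> bool) set" where
  "Oset n us = {f \<in> Gn n. cond1 n f us \<or> cond2 n f us \<or> cond3 n f us}"

lemma Oset_open: assumes n: "n \<ge> 1" shows "openin (Gn_top n) (Oset n us)"
proof -
  let ?F = "free_group n"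
  let ?A1 = "\<Union>r\<in>carrier ?F. Bs n r True \<inter> Bs n (sig n us r) False"
  let ?A2 = "\<Union>w\<in>carrier ?F. Bs n (sig n us w) True \<inter> Bs n w False"
  let ?A3 = "\<Inter>i\<in>{..<n}. \<Union>v\<in>carrier ?F. Bs n (sig n us v \<otimes>\<^bsub>?F\<^esub> inv\<^bsub>?F\<^esub> [(i, False)]) True"
  have cl: "sig n us v \<otimes>\<^bsub>?F\<^esub> inv\<^bsub>?F\<^esub> [(i, False)] \<in> carrier ?F" if "i < n" for v i
    using that gen_carrier[of "(i, False)" n] sig_carrier by simp
  have o1: "openin (Gn_top n) ?A1"
    by (intro openin_Union openin_Int) (auto intro: Bs_open sig_carrier)
  have o2: "openin (Gn_top n) ?A2"
    by (intro openin_Union openin_Int) (auto intro: Bs_open sig_carrier)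
  have ne: "{..<n} \<noteq> {}" using n by (simp add: lessThan_empty_iff)
  have oi: "openin (Gn_top n) (\<Union>v\<in>carrier ?F. Bs n (sig n us v \<otimes>\<^bsub>?F\<^esub> inv\<^bsub>?F\<^esub> [(i, False)]) True)"
    if "i < n" for i
    by (rule openin_Union) (use cl[OF that] in \<open>auto intro: Bs_open\<close>)
  have o3: "openin (Gn_top n) ?A3"
    by (rule openin_Inter) (use ne oi in auto)
  have "Oset n us = ?A1 \<union> ?A2 \<union> ?A3"
  proof
    show "Oset n us \<subseteq> ?A1 \<union> ?A2 \<union> ?A3"
      by (auto simp: Oset_def Bs_def cond1_def cond2_def cond3_def)
    show "?A1 \<union> ?A2 \<union> ?A3 \<subseteq> Oset n us"
    proof
      fix f assume f: "f \<in> ?A1 \<union> ?A2 \<union> ?A3"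
      have "f \<in> Gn n" using f ne by (auto simp: Bs_def)
      thus "f \<in> Oset n us" using f by (auto simp: Oset_def Bs_def cond1_def cond2_def cond3_def)
    qed
  qed
  thus ?thesis using o1 o2 o3 by (simp add: openin_Un)
qed

lemma Pi02_part:
  assumes n: "n \<ge> 1"
  shows "Pi02 (Gn_top n) (char_fun n ` {N. normal N (free_group n) \<and> co_hopfian (free_group n Mod N)})"
proof -
  let ?C = "char_fun n ` {N. normal N (free_group n) \<and> co_hopfian (free_group n Mod N)}"
  define V where "V k = Oset n (from_nat k)" for k
  have "\<forall>k. openin (Gn_top n) (V k)" using Oset_open[OF n] by (simp add: V_def)
  moreover have "?C = \<Inter> (range V)"
  proof
    show "?C \<subseteq> \<Inter> (range V)"
    proof
      fix f assume "f \<in> ?C"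
      then obtain N where N: "N \<lhd> free_group n" "co_hopfian (free_group n Mod N)" "f = char_fun n N" by auto
      have "f \<in> Gn n" using N by (auto simp: Gn_def)
      moreover have "cond1 n f us \<or> cond2 n f us \<or> cond3 n f us" for us
        using hopf_iff[OF N(1)] N by (simp add: conds_char)
      ultimately show "f \<in> \<Inter> (range V)" by (auto simp: V_def Oset_def)
    qed
    show "\<Inter> (range V) \<subseteq> ?C"
    proof
      fix f assume f: "f \<in> \<Inter> (range V)"
      hence "f \<in> Gn n" by (auto simp: V_def Oset_def)
      then obtain N where N: "N \<lhd> free_group n" "f = char_fun n N" by (auto simp: Gn_def)
      have "cond1 n f us \<or> cond2 n f us \<or> cond3 n f us" for us
        using f by (auto simp: V_def Oset_def dest: spec[of _ "to_nat us"])
      hence "co_hopfian (free_group n Mod N)"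
        using hopf_iff[OF N(1)] N(2) by (simp add: conds_char)
      thus "f \<in> ?C" using N by auto
    qed
  qed
  ultimately show ?thesis unfolding Pi02_def by blast
qed

lemma dvd_small: "int k dvd x \<Longrightarrow> \<bar>x\<bar> < int k \<Longrightarrow> x = 0"
  by (metis abs_of_nat dvd_imp_le_int not_less)

lemma not_closed_part:
  assumes n: "n \<ge> 1"
  shows "\<not> closedin (Gn_top n) (char_fun n ` {N. normal N (free_group n) \<and> co_hopfian (free_group n Mod N)})"
proof
  let ?C = "char_fun n ` {N. normal N (free_group n) \<and> co_hopfian (free_group n Mod N)}"
  assume cl: "closedin (Gn_top n) ?C"
  hence "openin (Gn_top n) (Gn n - ?C)" by (simp add: closedin_def topspace_Gn)
  then obtain T where T: "openin (cantor_top n) T" "Gn n - ?C = T \<inter> Gn n"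
    unfolding Gn_top_def openin_subtopology by blast
  let ?c0 = "char_fun n (Kk n 0)"
  have c0G: "?c0 \<in> Gn n" using Kk_normal by (auto simp: Gn_def)
  have c0C: "?c0 \<notin> ?C"
  proof
    assume "?c0 \<in> ?C"
    then obtain N where N: "N \<lhd> free_group n" "co_hopfian (free_group n Mod N)" "?c0 = char_fun n N" by auto
    have "N = Kk n 0"
      using char_fun_inj[OF normal.axioms(1)[THEN subgroup.subset, OF N(1)]
          normal.axioms(1)[THEN subgroup.subset, OF Kk_normal]] N(3) by simp
    thus False using N(2) K0_not_hopf[OF n] by simp
  qed
  have "?c0 \<in> T" using T(2) c0G c0C by blast
  then obtain U where U: "finite {i \<in> carrier (free_group n). U i \<noteq> topspace (discrete_topology (UNIV::bool set))}"
    "?c0 \<in> Pi\<^sub>E (carrier (free_group n)) U" "Pi\<^sub>E (carrier (free_group n)) U \<subseteq> T"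
    using T(1) unfolding cantor_top_def openin_product_topology_alt by blast
  let ?Fs = "{i \<in> carrier (free_group n). U i \<noteq> topspace (discrete_topology (UNIV::bool set))}"
  define M where "M = Max (insert 0 ((\<lambda>i. \<bar>ex i\<bar>) ` ?Fs))"
  have M: "\<bar>ex i\<bar> \<le> M" if "i \<in> ?Fs" for i
    unfolding M_def using U(1) that by (intro Max_ge) auto
  have M0: "0 \<le> M" unfolding M_def using U(1) by (intro Max_ge) auto
  define k where "k = Suc (nat M)"
  have k1: "k \<ge> 1" by (simp add: k_def)
  let ?ck = "char_fun n (Kk n k)"
  have ckG: "?ck \<in> Gn n" using Kk_normal by (auto simp: Gn_def)
  have ckC: "?ck \<in> ?C" using Kk_normal Kk_hopf[OF k1] by auto
  have "?ck \<in> Pi\<^sub>E (carrier (free_group n)) U"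
  proof -
    have "?ck i \<in> U i" if i: "i \<in> carrier (free_group n)" for i
    proof (cases "i \<in> ?Fs")
      case False thus ?thesis using i by simp
    next
      case True
      have lt: "\<bar>ex i\<bar> < int k" using M[OF True] M0 by (simp add: k_def)
      have "?ck i = ?c0 i"
        using i dvd_small[OF _ lt] by (auto simp: char_fun_eval Kk_mem)
      moreover have "?c0 i \<in> U i" using U(2) i by (auto simp: PiE_iff)
      ultimately show ?thesis by simp
    qed
    moreover have "?ck \<in> extensional (carrier (free_group n))" by (simp add: char_fun_def)
    ultimately show ?thesis by (simp add: PiE_iff)
  qed
  hence "?ck \<in> Gn n - ?C" using U(3) T(2) ckG by blast
  thus False using ckC by blast
qed

theorem mainTheorem16:
  fixes n :: nat
  assumes "2 \<le> n"
  defines "C \<equiv> char_fun n ` {N. normal N (free_group n) \<and> co_hopfian (free_group n Mod N)}"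
  shows "Pi02 (Gn_top n) C \<and> \<not> closedin (Gn_top n) C"
  using Pi02_part[of n] not_closed_part[of n] assms by simp


end
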